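(* Every $P_2$-irreducible tree $T$ is of one of the following forms: (1) $K_1$; (2) $P_2$ (a single edge); (3) a star $K_{1,n}$ with $n\geq 3$; (4) a tree containing at least two distinct vertices each of which is adjacent to at least two leaves.
   Context: A graph has a pendant $P_2$ if it contains distinct vertices $a,b,w$ such that $a$ has degree $1$ and is adjacent to $b$, and $b$ has degree $2$ with neighbors exactly $a$ and $w$ (i.e., a path on two vertices $a,b$ attached to the rest of the graph by the single edge $bw$). A graph is $P_2$-irreducible if it has no pendant $P_2$. A leaf is a vertex of degree $1$. *)

theory Defs
  imports Main
begin

definition sgraph :: "'a set \<Rightarrow> ('a \<Rightarrow> 'a \<Rightarrow> bool) \<Rightarrow> bool" where
  "sgraph V E \<longleftrightarrow> finite V \<and> (\<forall>x y. E x y \<longrightarrow> x \<in> V \<and> y \<in> V)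
     \<and> (\<forall>x y. E x y \<longrightarrow> E y x) \<and> (\<forall>x. \<not> E x x)"

definition neighbors :: "'a set \<Rightarrow> ('a \<Rightarrow> 'a \<Rightarrow> bool) \<Rightarrow> 'a \<Rightarrow> 'a set" where
  "neighbors V E v = {u \<in> V. E v u}"

definition degree :: "'a set \<Rightarrow> ('a \<Rightarrow> 'a \<Rightarrow> bool) \<Rightarrow> 'a \<Rightarrow> nat" where
  "degree V E v = card (neighbors V E v)"

definition is_path :: "'a set \<Rightarrow> ('a \<Rightarrow> 'a \<Rightarrow> bool) \<Rightarrow> 'a list \<Rightarrow> bool" where
  "is_path V E xs \<longleftrightarrow> xs \<noteq> [] \<and> set xs \<subseteq> V \<and> distinct xs
     \<and> (\<forall>i. Suc i < length xs \<longrightarrow> E (xs ! i) (xs ! Suc i))"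

definition is_cycle :: "'a set \<Rightarrow> ('a \<Rightarrow> 'a \<Rightarrow> bool) \<Rightarrow> 'a list \<Rightarrow> bool" where
  "is_cycle V E xs \<longleftrightarrow> length xs \<ge> 3 \<and> is_path V E xs \<and> E (last xs) (hd xs)"

definition connected_graph :: "'a set \<Rightarrow> ('a \<Rightarrow> 'a \<Rightarrow> bool) \<Rightarrow> bool" where
  "connected_graph V E \<longleftrightarrow>
     (\<forall>u\<in>V. \<forall>v\<in>V. \<exists>xs. is_path V E xs \<and> hd xs = u \<and> last xs = v)"

definition is_tree :: "'a set \<Rightarrow> ('a \<Rightarrow> 'a \<Rightarrow> bool) \<Rightarrow> bool" where
  "is_tree V E \<longleftrightarrow> sgraph V E \<and> V \<noteq> {} \<and> connected_graph V E
     \<and> \<not> (\<exists>xs. is_cycle V E xs)"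

definition leaf :: "'a set \<Rightarrow> ('a \<Rightarrow> 'a \<Rightarrow> bool) \<Rightarrow> 'a \<Rightarrow> bool" where
  "leaf V E v \<longleftrightarrow> v \<in> V \<and> degree V E v = 1"

definition has_pendant_P2 :: "'a set \<Rightarrow> ('a \<Rightarrow> 'a \<Rightarrow> bool) \<Rightarrow> bool" where
  "has_pendant_P2 V E \<longleftrightarrow> (\<exists>a b w. a \<in> V \<and> b \<in> V \<and> w \<in> V
     \<and> a \<noteq> b \<and> a \<noteq> w \<and> b \<noteq> w
     \<and> degree V E a = 1 \<and> E a b \<and> degree V E b = 2 \<and> neighbors V E b = {a, w})"

definition P2_irreducible :: "'a set \<Rightarrow> ('a \<Rightarrow> 'a \<Rightarrow> bool) \<Rightarrow> bool" where
  "P2_irreducible V E \<longleftrightarrow> \<not> has_pendant_P2 V E"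

definition is_K1 :: "'a set \<Rightarrow> ('a \<Rightarrow> 'a \<Rightarrow> bool) \<Rightarrow> bool" where
  "is_K1 V E \<longleftrightarrow> (\<exists>v. V = {v}) \<and> (\<forall>x y. \<not> E x y)"

definition is_P2 :: "'a set \<Rightarrow> ('a \<Rightarrow> 'a \<Rightarrow> bool) \<Rightarrow> bool" where
  "is_P2 V E \<longleftrightarrow> (\<exists>a b. a \<noteq> b \<and> V = {a, b}
     \<and> (\<forall>x y. E x y \<longleftrightarrow> (x = a \<and> y = b) \<or> (x = b \<and> y = a)))"

definition is_star :: "'a set \<Rightarrow> ('a \<Rightarrow> 'a \<Rightarrow> bool) \<Rightarrow> nat \<Rightarrow> bool" where
  "is_star V E n \<longleftrightarrow> finite V \<and> card V = n + 1 \<and> (\<exists>c\<in>V.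
     \<forall>x y. E x y \<longleftrightarrow> x \<in> V \<and> y \<in> V \<and> x \<noteq> y \<and> (x = c \<or> y = c))"

end

theory Submission imports Defs begin

lemma path_len: "sgraph V E \<Longrightarrow> is_path V E xs \<Longrightarrow> length xs < Suc (card V)"
  unfolding is_path_def sgraph_def
  by (metis card_mono distinct_card less_Suc_eq_le)

lemma longest: assumes "sgraph V E" "v \<in> V"
  obtains P where "is_path V E P" "\<forall>Q. is_path V E Q \<longrightarrow> length Q \<le> length P"
proof -
  have "is_path V E [v]" using assms by (simp add: is_path_def)
  then show ?thesis using ex_has_greatest_nat[of "is_path V E" "[v]" length "Suc (card V)"]
      path_len[OF assms(1)] that by blast
qed

lemma path3: "sgraph V E \<Longrightarrow> E x y \<Longrightarrow> E y z \<Longrightarrow> x \<noteq> z \<Longrightarrow> is_path V E [x,y,z]"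
  unfolding is_path_def sgraph_def
  by (auto simp: less_Suc_eq nth_Cons split: nat.splits)

lemma path_cons: "is_path V E xs \<Longrightarrow> x \<in> V \<Longrightarrow> x \<notin> set xs \<Longrightarrow> E x (hd xs) \<Longrightarrow> is_path V E (x#xs)"
  unfolding is_path_def
  by (auto simp: nth_Cons hd_conv_nth split: nat.splits)

lemma path_tl: "is_path V E xs \<Longrightarrow> 2 \<le> length xs \<Longrightarrow> is_path V E (tl xs)"
  unfolding is_path_def
  by (cases xs) auto

lemma path_rev: assumes "sgraph V E" "is_path V E xs" shows "is_path V E (rev xs)"
  unfolding is_path_def
proof (intro conjI allI impI)
  fix i assume i: "Suc i < length (rev xs)"
  let ?n = "length xs"
  have "E (xs ! (?n - Suc (Suc i))) (xs ! Suc (?n - Suc (Suc i)))"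
    using assms(2) i unfolding is_path_def by simp
  moreover have "Suc (?n - Suc (Suc i)) = ?n - Suc i" using i by simp
  ultimately show "E (rev xs ! i) (rev xs ! Suc i)"
    using assms(1) i unfolding sgraph_def by (simp add: rev_nth)
qed (use assms in \<open>auto simp: is_path_def\<close>)

lemma no_chord: assumes "is_tree V E" "is_path V E xs" "2 \<le> j" "j < length xs"
  shows "\<not> E (xs ! j) (xs ! 0)"
proof
  assume e: "E (xs ! j) (xs ! 0)"
  have "is_cycle V E (take (Suc j) xs)"
    using assms(2-4) e unfolding is_cycle_def is_path_def
    by (auto simp: last_conv_nth hd_conv_nth dest: in_set_takeD)
  then show False using assms(1) unfolding is_tree_def by blast
qed

lemma leafI: assumes "sgraph V E" "x \<in> V" "E x v" "\<forall>y. E x y \<longrightarrow> y = v"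
  shows "leaf V E x"
proof -
  have "v \<in> V" using assms(1,3) unfolding sgraph_def by blast
  then have "neighbors V E x = {v}" using assms(3,4) unfolding neighbors_def by blast
  then show ?thesis using assms(2) by (simp add: leaf_def degree_def)
qed

lemma nbr_leaf:
  assumes T: "is_tree V E" and P: "is_path V E P"
    and mx: "\<forall>Q. is_path V E Q \<longrightarrow> length Q \<le> length P"
    and l: "3 \<le> length P" and ex: "E (P!1) x" and x2: "x \<noteq> P!2"
  shows "leaf V E x"
proof -
  have G: "sgraph V E" using T by (simp add: is_tree_def)
  have sym: "\<And>a b. E a b \<Longrightarrow> E b a" and irr: "\<And>a. \<not> E a a"
    and inV: "\<And>a b. E a b \<Longrightarrow> a \<in> V \<and> b \<in> V"
    using G unfolding sgraph_def by blast+
  have xV: "x \<in> V" using inV ex by blast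
  have e01: "E (P!0) (P!1)" using P l unfolding is_path_def by auto
  have hdP: "hd P = P!0" using l by (cases P) auto
  have dP: "distinct P" using P by (simp add: is_path_def)
  show ?thesis
  proof (cases "x = P!0")
    case True
    have "y = P!1" if y: "E x y" for y
    proof (rule ccontr)
      assume yn: "y \<noteq> P!1"
      show False
      proof (cases "y \<in> set P")
        case False
        have "is_path V E (y # P)" using path_cons[OF P] inV[OF y] False y sym[OF y] True hdP by auto
        then show False using mx by fastforce
      next
        case True
        then obtain j where j: "j < length P" "P!j = y" by (metis in_set_conv_nth)
        have "j \<noteq> 0" using j y irr \<open>x = P!0\<close> by (metis gr0I)
        moreover have "j \<noteq> 1" using j yn by auto
        ultimately have "2 \<le> j" by simp
        then show False using no_chord[OF T P _ j(1)] j y \<open>x = P!0\<close> sym[OF y] by auto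
      qed
    qed
    then show ?thesis using leafI[OF G xV] True e01 by blast
  next
    case False
    have tlP: "is_path V E (tl P)" using path_tl[OF P] l by simp
    have hdtl: "hd (tl P) = P!1" using l by (cases P; cases "tl P") auto
    have xnot: "x \<notin> set P"
    proof
      assume "x \<in> set P"
      then obtain j where j: "j < length P" "P!j = x" by (metis in_set_conv_nth)
      have "j \<noteq> 0" "j \<noteq> 1" "j \<noteq> 2" using j False irr ex x2 by (metis gr0I, metis One_nat_def, metis)
      hence "2 \<le> j - 1" "j - 1 < length (tl P)" "tl P ! (j-1) = x" "tl P ! 0 = P!1"
        using j l by (auto simp: nth_tl)
      then show False using no_chord[OF T tlP, of "j-1"] ex sym[OF ex] by auto
    qed
    have p2: "is_path V E (x # tl P)"
      using path_cons[OF tlP xV] xnot hdtl sym[OF ex] ex l by (cases P) auto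
    have "y = P!1" if y: "E x y" for y
    proof (rule ccontr)
      assume yn: "y \<noteq> P!1"
      show False
      proof (cases "y \<in> set P")
        case False
        have "y \<notin> set (x # tl P)" using False irr y by (cases P) auto
        hence "is_path V E (y # x # tl P)" using path_cons[OF p2] inV[OF y] y sym[OF y] by auto
        then show False using mx l by fastforce
      next
        case True
        then obtain j where j: "j < length P" "P!j = y" by (metis in_set_conv_nth)
        have "j \<noteq> 1" using j yn by auto
        show False
        proof (cases "j = 0")
          case True
          have "is_path V E (x # P)" using path_cons[OF P xV xnot] y j True hdP by auto
          then show False using no_chord[OF T, of "x # P" 2] l ex by auto
        next
          case False
          hence "2 \<le> j" using \<open>j \<noteq> 1\<close> by simp
          moreover have "(x # tl P) ! j = y" using j \<open>2 \<le> j\<close> l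
            by (cases j) (auto simp: nth_tl)
          moreover have "j < length (x # tl P)" using j l by simp
          ultimately show False using no_chord[OF T p2, of j] y sym[OF y] by simp
        qed
      qed
    qed
    then show ?thesis using leafI[OF G xV] ex sym by blast
  qed
qed

lemma two_leaves:
  assumes T: "is_tree V E" and irr2: "P2_irreducible V E" and P: "is_path V E P"
    and mx: "\<forall>Q. is_path V E Q \<longrightarrow> length Q \<le> length P"
    and l: "3 \<le> length P"
  shows "card {y. leaf V E y \<and> E (P!1) y} \<ge> 2 \<and> 3 \<le> degree V E (P!1)
     \<and> (\<forall>x. E (P!1) x \<and> x \<noteq> P!2 \<longrightarrow> leaf V E x)"
proof -
  have G: "sgraph V E" using T by (simp add: is_tree_def)
  have sym: "\<And>a b. E a b \<Longrightarrow> E b a"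
    and inV: "\<And>a b. E a b \<Longrightarrow> a \<in> V \<and> b \<in> V" and fin: "finite V"
    using G unfolding sgraph_def by blast+
  have LF: "\<forall>x. E (P!1) x \<and> x \<noteq> P!2 \<longrightarrow> leaf V E x" using nbr_leaf[OF T P mx l] by blast
  have e01: "E (P!0) (P!1)" using P l unfolding is_path_def by auto
  have e12: "E (P!1) (P!2)" using P l unfolding is_path_def numeral_2_eq_2 by auto
  have d02: "P!0 \<noteq> P!2" and d01: "P!0 \<noteq> P!1" and d12: "P!1 \<noteq> P!2"
    using P l unfolding is_path_def by (auto simp: nth_eq_iff_index_eq)
  let ?N = "neighbors V E (P!1)"
  have finN: "finite ?N" using fin by (simp add: neighbors_def)
  have sub: "{P!0, P!2} \<subseteq> ?N" using e01 e12 sym inV by (auto simp: neighbors_def)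
  have c2: "card {P!0, P!2} = 2" using d02 by simp
  have "card ?N \<noteq> 2"
  proof
    assume c: "card ?N = 2"
    hence eq: "?N = {P!0, P!2}" using card_subset_eq[OF finN sub] c2 by simp
    have "leaf V E (P!0)" using LF sym[OF e01] d02 by blast
    hence "has_pendant_P2 V E" unfolding has_pendant_P2_def
      using inV[OF e01] inV[OF e12] d01 d02 d12 e01 c eq
      by (intro exI[of _ "P!0"] exI[of _ "P!1"] exI[of _ "P!2"]) (auto simp: leaf_def degree_def)
    then show False using irr2 by (simp add: P2_irreducible_def)
  qed
  moreover have "card ?N \<ge> 2" using card_mono[OF finN sub] c2 by simp
  ultimately have c3: "card ?N \<ge> 3" by simp
  have "?N - {P!2} \<subseteq> {y. leaf V E y \<and> E (P!1) y}" using LF by (auto simp: neighbors_def)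
  moreover have "finite {y. leaf V E y \<and> E (P!1) y}"
    by (rule finite_subset[OF _ fin]) (auto simp: leaf_def)
  moreover have "card (?N - {P!2}) \<ge> 2" using c3 finN sub by (simp add: card_Diff_singleton)
  ultimately have "card {y. leaf V E y \<and> E (P!1) y} \<ge> 2" by (meson card_mono le_trans)
  then show ?thesis using c3 LF by (simp add: degree_def)
qed

lemma leaf_uniq: assumes "sgraph V E" "leaf V E x" "E x a" "E x b" shows "a = b"
proof -
  have "a \<in> neighbors V E x" "b \<in> neighbors V E x"
    using assms unfolding sgraph_def neighbors_def by blast+
  moreover have "card (neighbors V E x) = 1" using assms(2) by (simp add: leaf_def degree_def)
  ultimately show ?thesis by (metis card_1_singletonE singletonD)
qed

lemma path2: assumes "sgraph V E" "E x y" shows "is_path V E [x,y]"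
proof -
  have "x \<in> V" "y \<in> V" "x \<noteq> y" using assms unfolding sgraph_def by blast+
  then show ?thesis using assms(2) unfolding is_path_def by auto
qed

theorem lemma1:
  fixes V :: "'a set" and E :: "'a \<Rightarrow> 'a \<Rightarrow> bool"
  assumes "is_tree V E" and "P2_irreducible V E"
  shows "is_K1 V E \<or> is_P2 V E \<or> (\<exists>n\<ge>3. is_star V E n)
    \<or> (\<exists>u\<in>V. \<exists>v\<in>V. u \<noteq> v
         \<and> card {l. leaf V E l \<and> E u l} \<ge> 2 \<and> card {l. leaf V E l \<and> E v l} \<ge> 2)"
proof -
  note T = assms(1)
  have G: "sgraph V E" using T by (simp add: is_tree_def)
  have sym: "\<And>a b. E a b \<Longrightarrow> E b a" and irr: "\<And>a. \<not> E a a"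
    and inV: "\<And>a b. E a b \<Longrightarrow> a \<in> V \<and> b \<in> V" and fin: "finite V"
    using G unfolding sgraph_def by blast+
  have conn: "\<And>u v. u \<in> V \<Longrightarrow> v \<in> V \<Longrightarrow> \<exists>xs. is_path V E xs \<and> hd xs = u \<and> last xs = v"
    using T unfolding is_tree_def connected_graph_def by blast
  obtain v0 where "v0 \<in> V" using T unfolding is_tree_def by blast
  then obtain P where P: "is_path V E P" and mx: "\<forall>Q. is_path V E Q \<longrightarrow> length Q \<le> length P"
    using longest[OF G] by blast
  have Pne: "P \<noteq> []" using P by (simp add: is_path_def)
  have dP: "distinct P" using P by (simp add: is_path_def)
  consider "length P = 1" | "length P = 2" | "length P = 3" | "length P \<ge> 4"
    using Pne by (cases "length P") (auto, linarith)
  then show ?thesis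
  proof cases
    case 1
    have noE: "\<not> E x y" for x y
    proof
      assume "E x y"
      from mx path2[OF G this] 1 show False by fastforce
    qed
    have "P!0 \<in> V" using P Pne by (auto simp: is_path_def)
    moreover have "u = P!0" if u: "u \<in> V" for u
    proof -
      obtain Q where Q: "is_path V E Q" "hd Q = P!0" "last Q = u" using conn[OF \<open>P!0 \<in> V\<close> u] by blast
      have "length Q \<le> 1" using mx Q 1 by auto
      moreover have "Q \<noteq> []" using Q by (simp add: is_path_def)
      ultimately obtain q where "Q = [q]" by (cases Q) auto
      then show ?thesis using Q by simp
    qed
    ultimately have "V = {P!0}" by blast
    then show ?thesis using noE unfolding is_K1_def by blast
  next
    case 2
    define a where "a = P!0"
    define b where "b = P!1"
    have eab: "E a b" using P 2 unfolding is_path_def a_def b_def by auto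
    have ab: "a \<noteq> b" using irr eab by blast
    have two: "y = z" if "E x y" "E x z" for x y z
    proof (rule ccontr)
      assume "y \<noteq> z"
      hence "is_path V E [y,x,z]" using path3[OF G sym[OF that(1)] that(2)] by simp
      then show False using mx 2 by fastforce
    qed
    have "u \<in> {a,b}" if u: "u \<in> V" for u
    proof -
      have aV: "a \<in> V" using inV[OF eab] by simp
      obtain Q where Q: "is_path V E Q" "hd Q = a" "last Q = u" using conn[OF aV u] by blast
      have lQ: "length Q \<le> 2" using mx Q 2 by auto
      have Qne: "Q \<noteq> []" using Q by (simp add: is_path_def)
      show ?thesis
      proof (cases "length Q = 1")
        case True
        then obtain q where "Q = [q]" by (cases Q) auto
        then show ?thesis using Q by simp
      next
        case False
        hence l2: "length Q = 2" using lQ False Qne length_greater_0_conv[of Q] by linarith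
        then obtain q1 q2 where Qe: "Q = [q1, q2]"
          by (metis One_nat_def Suc_1 length_0_conv length_Suc_conv)
        have "E q1 q2" using Q(1) unfolding is_path_def Qe by auto
        hence "q2 = b" using two[OF _ eab] Q(2) Qe by auto
        then show ?thesis using Q(3) Qe by simp
      qed
    qed
    moreover have "a \<in> V" "b \<in> V" using inV[OF eab] by auto
    ultimately have "V = {a,b}" by blast
    moreover have "E x y \<longleftrightarrow> (x = a \<and> y = b) \<or> (x = b \<and> y = a)" for x y
      using inV[of x y] \<open>V = {a,b}\<close> irr eab sym by auto
    ultimately show ?thesis unfolding is_P2_def using ab by blast
  next
    case 3
    have R: "is_path V E (rev P)" using path_rev[OF G P] .
    have mxR: "\<forall>Q. is_path V E Q \<longrightarrow> length Q \<le> length (rev P)" using mx by simp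
    have A: "3 \<le> degree V E (P!1)" "\<forall>x. E (P!1) x \<and> x \<noteq> P!2 \<longrightarrow> leaf V E x"
      using two_leaves[OF T assms(2) P mx] 3 by auto
    have B: "\<forall>x. E (rev P!1) x \<and> x \<noteq> rev P!2 \<longrightarrow> leaf V E x"
      using two_leaves[OF T assms(2) R mxR] 3 by auto
    have r1: "rev P ! 1 = P ! 1" and r2: "rev P ! 2 = P ! 0" using 3 by (auto simp: rev_nth)
    have d02: "P!0 \<noteq> P!2" using dP 3 by (simp add: nth_eq_iff_index_eq)
    define c where "c = P!1"
    have LF: "leaf V E x" if "E c x" for x using A(2) B r1 r2 d02 that c_def by metis
    have cV: "c \<in> V" using P 3 unfolding c_def is_path_def by auto
    have allc: "u = c \<or> E c u" if u: "u \<in> V" for u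
    proof (rule ccontr)
      assume nu: "\<not> (u = c \<or> E c u)"
      obtain Q where Q: "is_path V E Q" "hd Q = c" "last Q = u" using conn[OF cV u] by blast
      have Qne: "Q \<noteq> []" and dQ: "distinct Q" using Q by (auto simp: is_path_def)
      have h0: "Q!0 = c" using Q(2) Qne by (simp add: hd_conv_nth)
      have "length Q \<noteq> 1" using Q nu Qne by (cases Q) auto
      moreover have "length Q \<noteq> 2"
      proof
        assume "length Q = 2"
        then obtain q1 q2 where Qe: "Q = [q1, q2]"
          by (metis One_nat_def Suc_1 length_0_conv length_Suc_conv)
        have "E q1 q2" using Q(1) unfolding is_path_def Qe by auto
        then show False using nu Q Qe by auto
      qed
      ultimately have l3: "length Q \<ge> 3" using Qne length_greater_0_conv[of Q] by linarith
      have e1: "E (Q!0) (Q!1)" and e2: "E (Q!1) (Q!2)"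
        using Q(1) l3 unfolding is_path_def numeral_2_eq_2 by auto
      have "Q!0 \<noteq> Q!2" using nth_eq_iff_index_eq[OF dQ, of 0 2] Qne l3 by simp
      moreover have "leaf V E (Q!1)" using LF e1 h0 by simp
      ultimately show False using leaf_uniq[OF G _ sym[OF e1] e2] by blast
    qed
    have sub: "neighbors V E c \<subseteq> V - {c}" using irr by (auto simp: neighbors_def)
    have "3 \<le> card (V - {c})" using A(1) card_mono[OF _ sub] fin unfolding c_def degree_def
      by (metis c_def finite_Diff le_trans)
    hence cV3: "card V \<ge> 4" using cV fin by (simp add: card_Diff_singleton)
    have edge: "E x y \<longleftrightarrow> x \<in> V \<and> y \<in> V \<and> x \<noteq> y \<and> (x = c \<or> y = c)" for x y
    proof
      assume e: "E x y"
      have "x = c \<or> y = c"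
      proof (rule ccontr)
        assume "\<not> (x = c \<or> y = c)"
        hence "E c x" using allc inV[OF e] by blast
        then show False using leaf_uniq[OF G LF[OF \<open>E c x\<close>] sym[OF \<open>E c x\<close>] e]
            \<open>\<not> (x = c \<or> y = c)\<close> by blast
      qed
      then show "x \<in> V \<and> y \<in> V \<and> x \<noteq> y \<and> (x = c \<or> y = c)" using inV[OF e] irr e by auto
    next
      assume "x \<in> V \<and> y \<in> V \<and> x \<noteq> y \<and> (x = c \<or> y = c)"
      then show "E x y" using allc sym by blast
    qed
    have "is_star V E (card V - 1)" unfolding is_star_def using fin cV3 cV edge by auto
    moreover have "card V - 1 \<ge> 3" using cV3 by simp
    ultimately show ?thesis by blast
  next
    case 4
    have R: "is_path V E (rev P)" using path_rev[OF G P] .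
    have mxR: "\<forall>Q. is_path V E Q \<longrightarrow> length Q \<le> length (rev P)" using mx by simp
    have A: "card {y. leaf V E y \<and> E (P!1) y} \<ge> 2"
      using two_leaves[OF T assms(2) P mx] 4 by auto
    have B: "card {y. leaf V E y \<and> E (rev P!1) y} \<ge> 2"
      using two_leaves[OF T assms(2) R mxR] 4 by auto
    have r1: "rev P ! 1 = P ! (length P - 2)" using 4 by (simp add: rev_nth numeral_2_eq_2)
    have ne: "P!1 \<noteq> P!(length P - 2)" using dP 4 by (simp add: nth_eq_iff_index_eq)
    have inP: "P!1 \<in> V" "P!(length P - 2) \<in> V" using P 4 unfolding is_path_def by auto
    show ?thesis using A B r1 ne inP by metis
  qed
qed

end
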